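(* Let $J$ be an instance of TAP and let $a_1,a_2,\dots,a_n$ be an enumeration of all applicants (a master list of applicants) such that, for every school $s$, the preference list of $s$ is the restriction of the order $a_1,a_2,\dots,a_n$ to the applicants $a$ with $s\in S(a)$. Then $J$ admits exactly one stable matching, namely the matching $\mathcal M$ produced by the following procedure (Serial Dictatorship): start with $\mathcal M=\emptyset$; for $i=1,2,\dots,n$ in turn, if $S(a_i)$ contains a school $s$ such that $|\mathcal M_p(s)|<c_p(s)$ for both subjects $p\in\mathbf p(a_i)$, then add $(a_i,s)$ to $\mathcal M$ where $s$ is the most preferred such school on $a_i$'s preference list.
   Context: An instance of the Teachers Assignment Problem (TAP) consists of a finite set $A$ of applicants, a finite set $S$ of schools and a finite set $P$ of subjects. Each applicant $a\in A$ has a type $\mathbf p(a)=\{p_1(a),p_2(a)\}\subseteq P$ consisting of two distinct subjects, a set $S(a)\subseteq S$ of acceptable schools, and a strict linear order (her preference list) on $S(a)$. Each school $s$ has a partial capacity $c_p(s)\in\mathbb N$ for each subject $p\in P$, and a strict linear order (its preference list) on the set of applicants $a$ with $s\in S(a)$. An assignment $\mathcal M$ is a set of pairs $(a,s)$ with $s\in S(a)$ such that each applicant lies in at most one pair; write $\mathcal M(a)=s$ if $(a,s)\in\mathcal M$ and $\mathcal M(a)=\emptyset$ if $a$ is in no pair (unassigned). For a school $s$ and subjects $p,r$ let $\mathcal M_p(s)=\{a:(a,s)\in\mathcal M,\ p\in\mathbf p(a)\}$ and $\mathcal M_{p,r}(s)=\{a:(a,s)\in\mathcal M,\ \mathbf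 p(a)=\{p,r\}\}$. An assignment is a matching if $|\mathcal M_p(s)|\le c_p(s)$ for all $s\in S$, $p\in P$. School $s$ is undersubscribed in $p$ if $|\mathcal M_p(s)|<c_p(s)$. A pair $(a,s)$ with $s\in S(a)$ and $\mathbf p(a)=\{p_1,p_2\}$ blocks a matching $\mathcal M$ if ($a$ is unassigned or $a$ prefers $s$ to $\mathcal M(a)$) and at least one of: (i) $s$ is undersubscribed in both $p_1$ and $p_2$; (ii) for some $i\in\{1,2\}$, $s$ is undersubscribed in $p_i$ and $s$ prefers $a$ to some applicant in $\mathcal M_{p_{3-i}}(s)$; (iii) $s$ prefers $a$ to some applicant in $\mathcal M_{p_1,p_2}(s)$; (iv) $s$ prefers $a$ to two distinct applicants $a_1\in\mathcal M_{p_1}(s)$ and $a_2\in\mathcal M_{p_2}(s)$. A matching is stable if no pair blocks it. *)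

theory Defs
  imports Main
begin

text \<open>Applicants of type 'a, schools of type 's, subjects of type 'p.
  An instance is given by
    A :: applicant set, S :: school set, P :: subject set,
    ptype a :: the type of applicant a (two distinct subjects),
    acc a :: the set S(a) of acceptable schools,
    apref a s t :: applicant a strictly prefers school s to school t,
    cap s p :: partial capacity c_p(s),
    spref s a b :: school s strictly prefers applicant a to applicant b.\<close>

definition strict_linord_on :: "'x set \<Rightarrow> ('x \<Rightarrow> 'x \<Rightarrow> bool) \<Rightarrow> bool" where
  "strict_linord_on X R \<longleftrightarrow>
     (\<forall>x\<in>X. \<not> R x x) \<and>
     (\<forall>x\<in>X. \<forall>y\<in>X. \<forall>z\<in>X. R x y \<longrightarrow> R y z \<longrightarrow> R x z) \<and>
     (\<forall>x\<in>X. \<forall>y\<in>X. x \<noteq> y \<longrightarrow> R x y \<or> R y x)"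

definition tap_instance ::
  "'a set \<Rightarrow> 's set \<Rightarrow> 'p set \<Rightarrow> ('a \<Rightarrow> 'p set) \<Rightarrow> ('a \<Rightarrow> 's set)
   \<Rightarrow> ('a \<Rightarrow> 's \<Rightarrow> 's \<Rightarrow> bool) \<Rightarrow> ('s \<Rightarrow> 'p \<Rightarrow> nat) \<Rightarrow> ('s \<Rightarrow> 'a \<Rightarrow> 'a \<Rightarrow> bool) \<Rightarrow> bool" where
  "tap_instance A S P ptype acc apref cap spref \<longleftrightarrow>
     finite A \<and> finite S \<and> finite P \<and>
     (\<forall>a\<in>A. \<exists>p1 p2. p1 \<noteq> p2 \<and> ptype a = {p1, p2} \<and> ptype a \<subseteq> P) \<and>
     (\<forall>a\<in>A. acc a \<subseteq> S) \<and>
     (\<forall>a\<in>A. strict_linord_on (acc a) (apref a)) \<and>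
     (\<forall>s\<in>S. strict_linord_on {a\<in>A. s \<in> acc a} (spref s))"

definition is_assignment :: "'a set \<Rightarrow> ('a \<Rightarrow> 's set) \<Rightarrow> ('a \<times> 's) set \<Rightarrow> bool" where
  "is_assignment A acc M \<longleftrightarrow>
     (\<forall>(a,s)\<in>M. a \<in> A \<and> s \<in> acc a) \<and>
     (\<forall>a s t. (a,s) \<in> M \<longrightarrow> (a,t) \<in> M \<longrightarrow> s = t)"

definition Msub :: "('a \<Rightarrow> 'p set) \<Rightarrow> ('a \<times> 's) set \<Rightarrow> 's \<Rightarrow> 'p \<Rightarrow> 'a set" where
  "Msub ptype M s p = {a. (a,s) \<in> M \<and> p \<in> ptype a}"

definition Msub2 :: "('a \<Rightarrow> 'p set) \<Rightarrow> ('a \<times> 's) set \<Rightarrow> 's \<Rightarrow> 'p \<Rightarrow> 'p \<Rightarrow> 'a set" where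
  "Msub2 ptype M s p r = {a. (a,s) \<in> M \<and> ptype a = {p, r}}"

definition is_matching ::
  "'a set \<Rightarrow> 's set \<Rightarrow> 'p set \<Rightarrow> ('a \<Rightarrow> 'p set) \<Rightarrow> ('a \<Rightarrow> 's set)
   \<Rightarrow> ('s \<Rightarrow> 'p \<Rightarrow> nat) \<Rightarrow> ('a \<times> 's) set \<Rightarrow> bool" where
  "is_matching A S P ptype acc cap M \<longleftrightarrow>
     is_assignment A acc M \<and> (\<forall>s\<in>S. \<forall>p\<in>P. card (Msub ptype M s p) \<le> cap s p)"

definition undersub :: "('a \<Rightarrow> 'p set) \<Rightarrow> ('s \<Rightarrow> 'p \<Rightarrow> nat) \<Rightarrow> ('a \<times> 's) set \<Rightarrow> 's \<Rightarrow> 'p \<Rightarrow> bool" where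
  "undersub ptype cap M s p \<longleftrightarrow> card (Msub ptype M s p) < cap s p"

definition blocking ::
  "'a set \<Rightarrow> ('a \<Rightarrow> 'p set) \<Rightarrow> ('a \<Rightarrow> 's set) \<Rightarrow> ('a \<Rightarrow> 's \<Rightarrow> 's \<Rightarrow> bool)
   \<Rightarrow> ('s \<Rightarrow> 'p \<Rightarrow> nat) \<Rightarrow> ('s \<Rightarrow> 'a \<Rightarrow> 'a \<Rightarrow> bool) \<Rightarrow> ('a \<times> 's) set \<Rightarrow> 'a \<Rightarrow> 's \<Rightarrow> bool" where
  "blocking A ptype acc apref cap spref M a s \<longleftrightarrow>
     a \<in> A \<and> s \<in> acc a \<and>
     ((\<forall>t. (a,t) \<notin> M) \<or> (\<exists>t. (a,t) \<in> M \<and> apref a s t)) \<and>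
     (\<exists>p1 p2. p1 \<noteq> p2 \<and> ptype a = {p1, p2} \<and>
        ((undersub ptype cap M s p1 \<and> undersub ptype cap M s p2) \<or>
         (undersub ptype cap M s p1 \<and> (\<exists>b\<in>Msub ptype M s p2. spref s a b)) \<or>
         (undersub ptype cap M s p2 \<and> (\<exists>b\<in>Msub ptype M s p1. spref s a b)) \<or>
         (\<exists>b\<in>Msub2 ptype M s p1 p2. spref s a b) \<or>
         (\<exists>b1\<in>Msub ptype M s p1. \<exists>b2\<in>Msub ptype M s p2. b1 \<noteq> b2 \<and> spref s a b1 \<and> spref s a b2)))"

definition stable ::
  "'a set \<Rightarrow> 's set \<Rightarrow> 'p set \<Rightarrow> ('a \<Rightarrow> 'p set) \<Rightarrow> ('a \<Rightarrow> 's set)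
   \<Rightarrow> ('a \<Rightarrow> 's \<Rightarrow> 's \<Rightarrow> bool) \<Rightarrow> ('s \<Rightarrow> 'p \<Rightarrow> nat) \<Rightarrow> ('s \<Rightarrow> 'a \<Rightarrow> 'a \<Rightarrow> bool)
   \<Rightarrow> ('a \<times> 's) set \<Rightarrow> bool" where
  "stable A S P ptype acc apref cap spref M \<longleftrightarrow>
     is_matching A S P ptype acc cap M \<and>
     (\<forall>a s. \<not> blocking A ptype acc apref cap spref M a s)"

definition master_list ::
  "'a set \<Rightarrow> 's set \<Rightarrow> ('a \<Rightarrow> 's set) \<Rightarrow> ('s \<Rightarrow> 'a \<Rightarrow> 'a \<Rightarrow> bool) \<Rightarrow> 'a list \<Rightarrow> bool" where
  "master_list A S acc spref xs \<longleftrightarrow>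
     distinct xs \<and> set xs = A \<and>
     (\<forall>s\<in>S. \<forall>a\<in>A. \<forall>b\<in>A. s \<in> acc a \<longrightarrow> s \<in> acc b \<longrightarrow>
        (spref s a b \<longleftrightarrow> (\<exists>i j. i < j \<and> j < length xs \<and> xs ! i = a \<and> xs ! j = b)))"

definition sd_candidates ::
  "('a \<Rightarrow> 'p set) \<Rightarrow> ('a \<Rightarrow> 's set) \<Rightarrow> ('s \<Rightarrow> 'p \<Rightarrow> nat) \<Rightarrow> ('a \<times> 's) set \<Rightarrow> 'a \<Rightarrow> 's set" where
  "sd_candidates ptype acc cap M a = {s \<in> acc a. \<forall>p\<in>ptype a. undersub ptype cap M s p}"

definition sd_step ::
  "('a \<Rightarrow> 'p set) \<Rightarrow> ('a \<Rightarrow> 's set) \<Rightarrow> ('a \<Rightarrow> 's \<Rightarrow> 's \<Rightarrow> bool) \<Rightarrow> ('s \<Rightarrow> 'p \<Rightarrow> nat)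
   \<Rightarrow> ('a \<times> 's) set \<Rightarrow> 'a \<Rightarrow> ('a \<times> 's) set" where
  "sd_step ptype acc apref cap M a =
     (let C = sd_candidates ptype acc cap M a in
      if C = {} then M
      else insert (a, THE s. s \<in> C \<and> (\<forall>t\<in>C. t \<noteq> s \<longrightarrow> apref a s t)) M)"

definition serial_dictatorship ::
  "('a \<Rightarrow> 'p set) \<Rightarrow> ('a \<Rightarrow> 's set) \<Rightarrow> ('a \<Rightarrow> 's \<Rightarrow> 's \<Rightarrow> bool) \<Rightarrow> ('s \<Rightarrow> 'p \<Rightarrow> nat)
   \<Rightarrow> 'a list \<Rightarrow> ('a \<times> 's) set" where
  "serial_dictatorship ptype acc apref cap xs = foldl (sd_step ptype acc apref cap) {} xs"

end

theory Submission
  imports Defs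
begin

lemma slo_irrefl: "strict_linord_on X R \<Longrightarrow> x \<in> X \<Longrightarrow> \<not> R x x"
  unfolding strict_linord_on_def by blast

lemma slo_asym: "strict_linord_on X R \<Longrightarrow> x \<in> X \<Longrightarrow> y \<in> X \<Longrightarrow> R x y \<Longrightarrow> \<not> R y x"
  unfolding strict_linord_on_def by blast

lemma slo_total: "strict_linord_on X R \<Longrightarrow> x \<in> X \<Longrightarrow> y \<in> X \<Longrightarrow> x \<noteq> y \<Longrightarrow> \<not> R x y \<Longrightarrow> R y x"
  unfolding strict_linord_on_def by blast

lemma ex_max:
  assumes "finite C" "C \<noteq> {}" "C \<subseteq> X" "strict_linord_on X R"
  shows "\<exists>s\<in>C. \<forall>t\<in>C. t \<noteq> s \<longrightarrow> R s t"
  using assms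
proof (induction C rule: finite_ne_induct)
  case (singleton x) then show ?case by auto
next
  case (insert x F)
  then obtain s where s: "s \<in> F" "\<forall>t\<in>F. t \<noteq> s \<longrightarrow> R s t" by auto
  show ?case
  proof (cases "R x s")
    case True
    then show ?thesis using s insert.prems insert.hyps unfolding strict_linord_on_def
      by (metis insert_iff subset_eq)
  next
    case False
    then have "R s x" using slo_total[OF insert.prems(2), of x s] insert s by auto
    then show ?thesis using s by auto
  qed
qed

lemma before_lemma:
  assumes "distinct xs" "xs = us @ vs" "b \<in> set us" "a \<in> set vs"
  shows "(\<exists>i j. i < j \<and> j < length xs \<and> xs ! i = b \<and> xs ! j = a) \<and>
         \<not> (\<exists>i j. i < j \<and> j < length xs \<and> xs ! i = a \<and> xs ! j = b)"
proof -
  obtain i where i: "i < length us" "us ! i = b" using assms(3) by (auto simp: in_set_conv_nth)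
  obtain k where k: "k < length vs" "vs ! k = a" using assms(4) by (auto simp: in_set_conv_nth)
  have xi: "xs ! i = b" using i assms(2) by (simp add: nth_append)
  have xk: "xs ! (length us + k) = a" using k assms(2) by (simp add: nth_append)
  have lk: "length us + k < length xs" using k assms(2) by simp
  have li: "i < length xs" using i assms(2) by simp
  show ?thesis
  proof
    show "\<exists>i j. i < j \<and> j < length xs \<and> xs ! i = b \<and> xs ! j = a"
      using xi xk lk i by (intro exI[of _ i] exI[of _ "length us + k"]) auto
  next
    show "\<not> (\<exists>i j. i < j \<and> j < length xs \<and> xs ! i = a \<and> xs ! j = b)"
    proof
      assume "\<exists>i j. i < j \<and> j < length xs \<and> xs ! i = a \<and> xs ! j = b"
      then obtain i' j' where h: "i' < j'" "j' < length xs" "xs ! i' = a" "xs ! j' = b" by auto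
      have "i' = length us + k" using h xk lk assms(1) nth_eq_iff_index_eq by fastforce
      moreover have "j' = i" using h xi li assms(1) nth_eq_iff_index_eq by fastforce
      ultimately show False using h i by simp
    qed
  qed
qed

context
  fixes A :: "'a set" and S :: "'s set" and P :: "'p set"
    and ptype :: "'a \<Rightarrow> 'p set" and acc :: "'a \<Rightarrow> 's set"
    and apref :: "'a \<Rightarrow> 's \<Rightarrow> 's \<Rightarrow> bool" and cap :: "'s \<Rightarrow> 'p \<Rightarrow> nat"
    and spref :: "'s \<Rightarrow> 'a \<Rightarrow> 'a \<Rightarrow> bool" and xs :: "'a list"
  assumes inst: "tap_instance A S P ptype acc apref cap spref"
    and ml: "master_list A S acc spref xs"
begin

lemma finA: "finite A" using inst by (simp add: tap_instance_def)
lemma accS: "a \<in> A \<Longrightarrow> acc a \<subseteq> S" using inst by (simp add: tap_instance_def)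
lemma ptyp: "a \<in> A \<Longrightarrow> \<exists>p1 p2. p1 \<noteq> p2 \<and> ptype a = {p1, p2} \<and> ptype a \<subseteq> P"
  using inst by (simp add: tap_instance_def)
lemma aslo: "a \<in> A \<Longrightarrow> strict_linord_on (acc a) (apref a)"
  using inst by (simp add: tap_instance_def)
lemma distxs: "distinct xs" using ml by (simp add: master_list_def)
lemma setxs: "set xs = A" using ml by (simp add: master_list_def)

lemma spref_before:
  assumes "xs = us @ vs" "b \<in> set us" "a \<in> set vs" "s \<in> S" "s \<in> acc a" "s \<in> acc b"
  shows "spref s b a \<and> \<not> spref s a b"
proof -
  have ab: "a \<in> A" "b \<in> A" using assms setxs by auto
  have "\<forall>a\<in>A. \<forall>b\<in>A. s \<in> acc a \<longrightarrow> s \<in> acc b \<longrightarrow>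
        (spref s a b \<longleftrightarrow> (\<exists>i j. i < j \<and> j < length xs \<and> xs ! i = a \<and> xs ! j = b))"
    using ml assms(4) by (simp add: master_list_def)
  then show ?thesis using before_lemma[OF distxs assms(1-3)] ab assms(5,6) by blast
qed

lemma Msub_fin: "is_assignment A acc M \<Longrightarrow> finite (Msub ptype M s p)"
  unfolding is_assignment_def Msub_def
  by (rule finite_subset[OF _ finA]) auto

lemma assign_fin: "is_assignment A acc M \<Longrightarrow> finite M"
proof -
  assume h: "is_assignment A acc M"
  have "M \<subseteq> A \<times> (\<Union>a\<in>A. acc a)" using h unfolding is_assignment_def by auto
  moreover have "finite (\<Union>a\<in>A. acc a)"
    using finA accS inst by (simp add: tap_instance_def) (meson finite_subset)
  ultimately show ?thesis using finA by (meson finite_SigmaI finite_subset)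
qed

lemma sd_step_props:
  assumes M: "is_matching A S P ptype acc cap M" and a: "a \<in> A" and un: "\<forall>t. (a,t) \<notin> M"
  shows "is_matching A S P ptype acc cap (sd_step ptype acc apref cap M a) \<and>
         M \<subseteq> sd_step ptype acc apref cap M a \<and>
         (\<forall>b s. (b,s) \<in> sd_step ptype acc apref cap M a \<longrightarrow> (b,s) \<in> M \<or> b = a) \<and>
         (sd_candidates ptype acc cap M a = {} \<longrightarrow> sd_step ptype acc apref cap M a = M) \<and>
         (sd_candidates ptype acc cap M a \<noteq> {} \<longrightarrow>
            (\<exists>s0. s0 \<in> sd_candidates ptype acc cap M a \<and>
               (\<forall>t\<in>sd_candidates ptype acc cap M a. t \<noteq> s0 \<longrightarrow> apref a s0 t) \<and>
               sd_step ptype acc apref cap M a = insert (a,s0) M))"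
proof (cases "sd_candidates ptype acc cap M a = {}")
  case True
  then show ?thesis using M by (simp add: sd_step_def)
next
  case False
  let ?C = "sd_candidates ptype acc cap M a"
  have Cs: "?C \<subseteq> acc a" unfolding sd_candidates_def by auto
  have finC: "finite ?C" using Cs accS[OF a] finite_subset inst a
    by (metis (no_types, lifting) tap_instance_def)
  obtain s0 where s0: "s0 \<in> ?C" "\<forall>t\<in>?C. t \<noteq> s0 \<longrightarrow> apref a s0 t"
    using ex_max[OF finC False Cs aslo[OF a]] by blast
  have the: "(THE s. s \<in> ?C \<and> (\<forall>t\<in>?C. t \<noteq> s \<longrightarrow> apref a s t)) = s0"
  proof (rule the_equality)
    show "s0 \<in> ?C \<and> (\<forall>t\<in>?C. t \<noteq> s0 \<longrightarrow> apref a s0 t)" using s0 by blast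
  next
    fix s assume h: "s \<in> ?C \<and> (\<forall>t\<in>?C. t \<noteq> s \<longrightarrow> apref a s t)"
    show "s = s0"
    proof (rule ccontr)
      assume "s \<noteq> s0"
      then have "apref a s s0" "apref a s0 s" using h s0 by auto
      then show False using slo_asym[OF aslo[OF a]] h s0 Cs by blast
    qed
  qed
  have step: "sd_step ptype acc apref cap M a = insert (a,s0) M"
    using False the by (simp add: sd_step_def Let_def)
  have s0acc: "s0 \<in> acc a" and und: "\<forall>p\<in>ptype a. undersub ptype cap M s0 p"
    using s0 unfolding sd_candidates_def by auto
  have asg: "is_assignment A acc M" using M by (simp add: is_matching_def)
  have asg': "is_assignment A acc (insert (a,s0) M)"
    using asg un a s0acc unfolding is_assignment_def by auto
  have cards: "card (Msub ptype (insert (a,s0) M) s p) \<le> cap s p" if "s \<in> S" "p \<in> P" for s p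
  proof (cases "s = s0 \<and> p \<in> ptype a")
    case True
    then have "Msub ptype (insert (a,s0) M) s p = insert a (Msub ptype M s p)"
      unfolding Msub_def by auto
    moreover have "a \<notin> Msub ptype M s p" using un unfolding Msub_def by auto
    ultimately have "card (Msub ptype (insert (a,s0) M) s p) = Suc (card (Msub ptype M s p))"
      using Msub_fin[OF asg] by simp
    moreover have "undersub ptype cap M s p" using und True by auto
    ultimately show ?thesis unfolding undersub_def by simp
  next
    case False
    then have "Msub ptype (insert (a,s0) M) s p = Msub ptype M s p"
      unfolding Msub_def by auto
    then show ?thesis using M that by (simp add: is_matching_def)
  qed
  show ?thesis using step s0 asg' cards False by (auto simp: is_matching_def)
qed


lemma fold_props:
  assumes "is_matching A S P ptype acc cap M" "set zs \<subseteq> A" "distinct zs"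
    "\<forall>z\<in>set zs. \<forall>t. (z,t) \<notin> M"
  shows "is_matching A S P ptype acc cap (foldl (sd_step ptype acc apref cap) M zs) \<and>
         M \<subseteq> foldl (sd_step ptype acc apref cap) M zs \<and>
         (\<forall>b s. (b,s) \<in> foldl (sd_step ptype acc apref cap) M zs \<longrightarrow> (b,s) \<in> M \<or> b \<in> set zs)"
  using assms
proof (induction zs arbitrary: M)
  case Nil then show ?case by simp
next
  case (Cons z zs)
  let ?N1 = "sd_step ptype acc apref cap M z"
  have p: "is_matching A S P ptype acc cap ?N1" "M \<subseteq> ?N1"
    "\<forall>b s. (b,s) \<in> ?N1 \<longrightarrow> (b,s) \<in> M \<or> b = z"
    using sd_step_props[OF Cons.prems(1), of z] Cons.prems by auto
  have "\<forall>y\<in>set zs. \<forall>t. (y,t) \<notin> ?N1" using p(3) Cons.prems by fastforce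
  then have IH: "is_matching A S P ptype acc cap (foldl (sd_step ptype acc apref cap) ?N1 zs) \<and>
         ?N1 \<subseteq> foldl (sd_step ptype acc apref cap) ?N1 zs \<and>
         (\<forall>b s. (b,s) \<in> foldl (sd_step ptype acc apref cap) ?N1 zs \<longrightarrow> (b,s) \<in> ?N1 \<or> b \<in> set zs)"
    using Cons.IH[OF p(1)] Cons.prems by auto
  show ?case unfolding foldl_Cons list.set using IH p by blast
qed

lemma empty_matching: "is_matching A S P ptype acc cap {}"
  by (simp add: is_matching_def is_assignment_def Msub_def)

lemma sd_props:
  assumes "xs = us @ vs"
  shows "is_matching A S P ptype acc cap (foldl (sd_step ptype acc apref cap) {} us) \<and>
         (\<forall>b s. (b,s) \<in> foldl (sd_step ptype acc apref cap) {} us \<longrightarrow> b \<in> set us)"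
  using fold_props[OF empty_matching, of us] assms distxs setxs by auto

lemma sd_stable: "stable A S P ptype acc apref cap spref (serial_dictatorship ptype acc apref cap xs)"
proof -
  let ?f = "sd_step ptype acc apref cap"
  let ?M = "serial_dictatorship ptype acc apref cap xs"
  have Mm: "is_matching A S P ptype acc cap ?M"
    using sd_props[of xs "[]"] by (simp add: serial_dictatorship_def)
  have asgM: "is_assignment A acc ?M" using Mm by (simp add: is_matching_def)
  have "\<not> blocking A ptype acc apref cap spref ?M a s" for a s
  proof
    assume bl: "blocking A ptype acc apref cap spref ?M a s"
    then have a: "a \<in> A" and sa: "s \<in> acc a" unfolding blocking_def by auto
    have sS: "s \<in> S" using accS[OF a] sa by auto
    obtain ys zs where xsd: "xs = ys @ a # zs" using a setxs by (metis split_list)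
    let ?N0 = "foldl ?f {} ys"
    let ?N1 = "?f ?N0 a"
    have M0p: "is_matching A S P ptype acc cap ?N0" "\<forall>b s. (b,s) \<in> ?N0 \<longrightarrow> b \<in> set ys"
      using sd_props[OF xsd] by auto
    have ays: "a \<notin> set ys" "a \<notin> set zs" using distxs xsd by auto
    have un0: "\<forall>t. (a,t) \<notin> ?N0" using M0p(2) ays by blast
    note st = sd_step_props[OF M0p(1) a un0]
    have M1m: "is_matching A S P ptype acc cap ?N1" using st by blast
    have zsA: "set zs \<subseteq> A" "distinct zs" using xsd setxs distxs by auto
    have un1: "\<forall>z\<in>set zs. \<forall>t. (z,t) \<notin> ?N1"
    proof (intro ballI allI notI)
      fix z t assume "z \<in> set zs" "(z,t) \<in> ?N1"
      then show False using st M0p(2) distxs xsd by fastforce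
    qed
    have Meq: "?M = foldl ?f ?N1 zs" unfolding serial_dictatorship_def xsd foldl_append foldl_Cons by (rule refl)
    have fp1: "?N1 \<subseteq> foldl ?f ?N1 zs" and fp2: "\<forall>b s. (b,s) \<in> foldl ?f ?N1 zs \<longrightarrow> (b,s) \<in> ?N1 \<or> b \<in> set zs"
      using fold_props[OF M1m zsA un1] by auto
    have N01: "?N0 \<subseteq> ?N1" using st by blast
    have M01: "?N0 \<subseteq> ?M" using N01 fp1 Meq by simp
    have aM: "(a,t) \<in> ?M \<longleftrightarrow> (a,t) \<in> ?N1" for t
    proof
      assume "(a,t) \<in> ?M" then show "(a,t) \<in> ?N1" using fp2 Meq ays(2) by auto
    next
      assume "(a,t) \<in> ?N1" then show "(a,t) \<in> ?M" using fp1 Meq by auto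
    qed
    have notC: "s \<notin> sd_candidates ptype acc cap ?N0 a"
    proof
      assume sC: "s \<in> sd_candidates ptype acc cap ?N0 a"
      then obtain s0 where s0: "s0 \<in> sd_candidates ptype acc cap ?N0 a"
        "\<forall>t\<in>sd_candidates ptype acc cap ?N0 a. t \<noteq> s0 \<longrightarrow> apref a s0 t" "?N1 = insert (a,s0) ?N0"
        using st by blast
      have "(a,s0) \<in> ?M" using aM s0 by blast
      then have "apref a s s0" using bl asgM unfolding blocking_def is_assignment_def by blast
      moreover have "s0 \<in> acc a" using s0 unfolding sd_candidates_def by auto
      ultimately show False
      proof (cases "s = s0")
        case True then show False using \<open>apref a s s0\<close> slo_irrefl[OF aslo[OF a]] sa by blast
      next
        case False
        then have "apref a s0 s" using s0(2) sC by blast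
        then show False using \<open>apref a s s0\<close> \<open>s0 \<in> acc a\<close> sa slo_asym[OF aslo[OF a]] by blast
      qed
    qed
    then obtain p where p: "p \<in> ptype a" "\<not> undersub ptype cap ?N0 s p"
      using sa unfolding sd_candidates_def by auto
    have pP: "p \<in> P" using ptyp[OF a] p by auto
    have sub: "Msub ptype ?N0 s p \<subseteq> Msub ptype ?M s p" using M01 unfolding Msub_def by auto
    have "card (Msub ptype ?M s p) \<le> cap s p" using Mm sS pP by (simp add: is_matching_def)
    then have eq: "Msub ptype ?N0 s p = Msub ptype ?M s p"
    proof -
      have "cap s p \<le> card (Msub ptype ?N0 s p)" using p(2) unfolding undersub_def by simp
      then have "card (Msub ptype ?M s p) \<le> card (Msub ptype ?N0 s p)"
        using \<open>card (Msub ptype ?M s p) \<le> cap s p\<close> by linarith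
      then show ?thesis using card_seteq[OF Msub_fin[OF asgM] sub] by simp
    qed
    have full: "\<not> undersub ptype cap ?M s p" using p(2) eq unfolding undersub_def by simp
    have nb: "\<forall>b\<in>Msub ptype ?M s p. \<not> spref s a b"
    proof
      fix b assume "b \<in> Msub ptype ?M s p"
      then have b: "b \<in> set ys" "(b,s) \<in> ?N0" using eq M0p(2) unfolding Msub_def by auto
      have "s \<in> acc b" using b(2) M0p(1) unfolding is_matching_def is_assignment_def by auto
      then show "\<not> spref s a b" using spref_before[of ys "a # zs" b a s] xsd b sS sa by auto
    qed
    from bl obtain q1 q2 where q: "q1 \<noteq> q2" "ptype a = {q1,q2}" and
      D: "(undersub ptype cap ?M s q1 \<and> undersub ptype cap ?M s q2) \<or>
         (undersub ptype cap ?M s q1 \<and> (\<exists>b\<in>Msub ptype ?M s q2. spref s a b)) \<or>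
         (undersub ptype cap ?M s q2 \<and> (\<exists>b\<in>Msub ptype ?M s q1. spref s a b)) \<or>
         (\<exists>b\<in>Msub2 ptype ?M s q1 q2. spref s a b) \<or>
         (\<exists>b1\<in>Msub ptype ?M s q1. \<exists>b2\<in>Msub ptype ?M s q2. b1 \<noteq> b2 \<and> spref s a b1 \<and> spref s a b2)"
      unfolding blocking_def by blast
    have m2: "Msub2 ptype ?M s q1 q2 \<subseteq> Msub ptype ?M s p"
      using q p unfolding Msub2_def Msub_def by auto
    have "p = q1 \<or> p = q2" using q p by auto
    then show False
    proof
      assume "p = q1" then show False using D full nb m2 by blast
    next
      assume "p = q2" then show False using D full nb m2 by blast
    qed
  qed
  then show ?thesis using Mm by (simp add: stable_def)
qed


lemma uniq_step:
  assumes stM: "stable A S P ptype acc apref cap spref M"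
    and xsd: "xs = ys @ a # zs"
    and IH: "foldl (sd_step ptype acc apref cap) {} ys = {(b,s)\<in>M. b \<in> set ys}"
  shows "sd_step ptype acc apref cap {(b,s)\<in>M. b \<in> set ys} a = {(b,s)\<in>M. b \<in> set (ys @ [a])}"
proof -
  let ?R = "{(b,s)\<in>M. b \<in> set ys}"
  let ?C = "sd_candidates ptype acc cap ?R a"
  have Mm: "is_matching A S P ptype acc cap M" using stM by (simp add: stable_def)
  have asgM: "is_assignment A acc M" using Mm by (simp add: is_matching_def)
  have nbl: "\<And>s. \<not> blocking A ptype acc apref cap spref M a s" using stM by (simp add: stable_def)
  have a: "a \<in> A" using xsd setxs by auto
  have ays: "a \<notin> set ys" using distxs xsd by auto
  have Rm: "is_matching A S P ptype acc cap ?R" using sd_props[of ys "a # zs"] xsd IH by simp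
  have un: "\<forall>t. (a,t) \<notin> ?R" using ays by auto
  note st = sd_step_props[OF Rm a un]
  note st4 = st[THEN conjunct2, THEN conjunct2, THEN conjunct2, THEN conjunct1]
  note st5 = st[THEN conjunct2, THEN conjunct2, THEN conjunct2, THEN conjunct2]
  have uniqM: "(a,t) \<in> M \<Longrightarrow> (a,t') \<in> M \<Longrightarrow> t = t'" for t t'
    using asgM unfolding is_assignment_def by blast
  have B: "blocking A ptype acc apref cap spref M a s"
    if sC: "s \<in> ?C" and pr: "(\<forall>t. (a,t) \<notin> M) \<or> (\<exists>t. (a,t) \<in> M \<and> apref a s t)" for s
  proof -
    have sa: "s \<in> acc a" and und: "\<forall>p\<in>ptype a. undersub ptype cap ?R s p"
      using sC unfolding sd_candidates_def by auto
    have sS: "s \<in> S" using accS[OF a] sa by auto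
    have asM: "(a,s) \<notin> M"
    proof
      assume h: "(a,s) \<in> M"
      then obtain t where "(a,t) \<in> M" "apref a s t" using pr by blast
      then show False using uniqM[OF h] slo_irrefl[OF aslo[OF a] sa] by blast
    qed
    have sub: "Msub ptype ?R s p \<subseteq> Msub ptype M s p" for p unfolding Msub_def by auto
    have ex: "\<exists>b\<in>Msub ptype M s p. spref s a b \<and> b \<notin> Msub ptype ?R s p"
      if p: "p \<in> ptype a" "\<not> undersub ptype cap M s p" for p
    proof -
      have "card (Msub ptype ?R s p) < card (Msub ptype M s p)"
        using p und unfolding undersub_def by auto
      moreover have "finite (Msub ptype ?R s p)" using Msub_fin[of ?R] Rm unfolding is_matching_def by blast
      ultimately have "\<not> Msub ptype M s p \<subseteq> Msub ptype ?R s p"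
        using card_mono[of "Msub ptype ?R s p" "Msub ptype M s p"] by linarith
      then obtain b where b: "b \<in> Msub ptype M s p" "b \<notin> Msub ptype ?R s p" by blast
      then have bM: "(b,s) \<in> M" and bys: "b \<notin> set ys" unfolding Msub_def by auto
      have bA: "b \<in> A" and sb: "s \<in> acc b" using bM asgM unfolding is_assignment_def by auto
      have "b \<noteq> a" using bM asM by auto
      then have "b \<in> set zs" using bA setxs xsd bys by auto
      then have "spref s a b" using spref_before[of "ys @ [a]" zs a b s] xsd sS sa sb by auto
      then show ?thesis using b by blast
    qed
    obtain p1 p2 where pp: "p1 \<noteq> p2" "ptype a = {p1,p2}" using ptyp[OF a] by blast
    have p1a: "p1 \<in> ptype a" and p2a: "p2 \<in> ptype a" using pp by auto
    have disj: "(undersub ptype cap M s p1 \<and> undersub ptype cap M s p2) \<or>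
         (undersub ptype cap M s p1 \<and> (\<exists>b\<in>Msub ptype M s p2. spref s a b)) \<or>
         (undersub ptype cap M s p2 \<and> (\<exists>b\<in>Msub ptype M s p1. spref s a b)) \<or>
         (\<exists>b\<in>Msub2 ptype M s p1 p2. spref s a b) \<or>
         (\<exists>b1\<in>Msub ptype M s p1. \<exists>b2\<in>Msub ptype M s p2. b1 \<noteq> b2 \<and> spref s a b1 \<and> spref s a b2)"
    proof (cases "undersub ptype cap M s p1")
      case u1: True
      show ?thesis
      proof (cases "undersub ptype cap M s p2")
        case True show ?thesis by (rule disjI1, rule conjI[OF u1 True])
      next
        case False
        obtain b where "b \<in> Msub ptype M s p2" "spref s a b" using ex[OF p2a False] by blast
        then have e: "\<exists>b\<in>Msub ptype M s p2. spref s a b" by blast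
        show ?thesis by (rule disjI2, rule disjI1, rule conjI[OF u1 e])
      qed
    next
      case u1: False
      obtain b1 where b1: "b1 \<in> Msub ptype M s p1" "spref s a b1" using ex[OF p1a u1] by blast
      show ?thesis
      proof (cases "undersub ptype cap M s p2")
        case True
        have e: "\<exists>b\<in>Msub ptype M s p1. spref s a b" using b1 by blast
        show ?thesis by (rule disjI2, rule disjI2, rule disjI1, rule conjI[OF True e])
      next
        case False
        obtain b2 where b2: "b2 \<in> Msub ptype M s p2" "spref s a b2" using ex[OF p2a False] by blast
        show ?thesis
        proof (cases "b1 = b2")
          case False
          have "\<exists>b1\<in>Msub ptype M s p1. \<exists>b2\<in>Msub ptype M s p2. b1 \<noteq> b2 \<and> spref s a b1 \<and> spref s a b2"
            using b1 b2 False by blast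
          then show ?thesis by blast
        next
          case True
          have bM: "(b1,s) \<in> M" and "p1 \<in> ptype b1" "p2 \<in> ptype b1"
            using b1 b2 True unfolding Msub_def by auto
          moreover have "b1 \<in> A" using bM asgM unfolding is_assignment_def by auto
          ultimately obtain q1 q2 where "ptype b1 = {q1,q2}" using ptyp[of b1] by blast
          then have "ptype b1 = {p1,p2}" using \<open>p1 \<in> ptype b1\<close> \<open>p2 \<in> ptype b1\<close> pp(1) by auto
          then have "b1 \<in> Msub2 ptype M s p1 p2" using bM unfolding Msub2_def by auto
          then have "\<exists>b\<in>Msub2 ptype M s p1 p2. spref s a b" using b1 by blast
          then show ?thesis by blast
        qed
      qed
    qed
    show ?thesis unfolding blocking_def
      by (intro conjI a sa pr exI[of _ p1] exI[of _ p2]) (rule pp(1), rule pp(2), rule disj)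
  qed
  show ?thesis
  proof (cases "\<exists>t. (a,t) \<in> M")
    case False
    then have "?C = {}" using B nbl by blast
    then have "sd_step ptype acc apref cap ?R a = ?R" by (rule mp[OF st4])
    moreover have "{(b,s)\<in>M. b \<in> set (ys @ [a])} = ?R" using False by force
    ultimately show ?thesis by simp
  next
    case True
    then obtain t where t: "(a,t) \<in> M" by blast
    have ta: "t \<in> acc a" using t asgM unfolding is_assignment_def by auto
    have tS: "t \<in> S" using accS[OF a] ta by auto
    have tC: "t \<in> ?C" unfolding sd_candidates_def undersub_def
    proof (intro CollectI conjI ta ballI)
      fix p assume p: "p \<in> ptype a"
      have pP: "p \<in> P" using ptyp[OF a] p by auto
      have "Msub ptype ?R t p \<subseteq> Msub ptype M t p - {a}" using ays unfolding Msub_def by auto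
      moreover have "a \<in> Msub ptype M t p" using t p unfolding Msub_def by auto
      ultimately have "card (Msub ptype ?R t p) < card (Msub ptype M t p)"
      proof -
        assume s1: "Msub ptype ?R t p \<subseteq> Msub ptype M t p - {a}" and a1: "a \<in> Msub ptype M t p"
        have f: "finite (Msub ptype M t p)" using Msub_fin[OF asgM] .
        have "card (Msub ptype ?R t p) \<le> card (Msub ptype M t p - {a})"
          using card_mono[OF _ s1] f by simp
        also have "\<dots> < card (Msub ptype M t p)" using card_Diff1_less[OF f a1] .
        finally show ?thesis .
      qed
      moreover have "card (Msub ptype M t p) \<le> cap t p" using Mm tS pP by (simp add: is_matching_def)
      ultimately show "card (Msub ptype ?R t p) < cap t p" by simp
    qed
    then have Cne: "?C \<noteq> {}" by blast
    from mp[OF st5 Cne] obtain s0 where s0: "s0 \<in> ?C" "\<forall>t\<in>?C. t \<noteq> s0 \<longrightarrow> apref a s0 t"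
      "sd_step ptype acc apref cap ?R a = insert (a,s0) ?R" by blast
    have "s0 = t"
    proof (rule ccontr)
      assume ne: "s0 \<noteq> t"
      have s0a: "s0 \<in> acc a" using s0 unfolding sd_candidates_def by auto
      have "apref a s0 t" using s0(2) tC ne by auto
      then have "blocking A ptype acc apref cap spref M a s0" using B[OF s0(1)] t by blast
      then show False using nbl by blast
    qed
    moreover have "{(b,s)\<in>M. b \<in> set (ys @ [a])} = insert (a,t) ?R" using t uniqM by auto
    ultimately show ?thesis using s0(3) by simp
  qed
qed

lemma uniq:
  assumes stM: "stable A S P ptype acc apref cap spref M"
  shows "xs = ys @ zs \<Longrightarrow> foldl (sd_step ptype acc apref cap) {} ys = {(b,s)\<in>M. b \<in> set ys}"
proof (induction ys arbitrary: zs rule: rev_induct)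
  case Nil then show ?case by simp
next
  case (snoc a ys)
  then have xs': "xs = ys @ a # zs" by simp
  have IH': "foldl (sd_step ptype acc apref cap) {} ys = {(b,s)\<in>M. b \<in> set ys}"
    using snoc.IH[of "a # zs"] xs' by simp
  have "foldl (sd_step ptype acc apref cap) {} (ys @ [a]) =
        sd_step ptype acc apref cap (foldl (sd_step ptype acc apref cap) {} ys) a" by simp
  also have "\<dots> = {(b,s)\<in>M. b \<in> set (ys @ [a])}" unfolding IH' by (rule uniq_step[OF stM xs' IH'])
  finally show ?case .
qed

lemma uniq_final:
  assumes stM: "stable A S P ptype acc apref cap spref M"
  shows "M = serial_dictatorship ptype acc apref cap xs"
proof -
  have "serial_dictatorship ptype acc apref cap xs = {(b,s)\<in>M. b \<in> set xs}"
    using uniq[OF stM, of xs "[]"] by (simp add: serial_dictatorship_def)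
  moreover have "{(b,s)\<in>M. b \<in> set xs} = M"
  proof -
    have "is_assignment A acc M" using stM by (simp add: stable_def is_matching_def)
    then have "\<forall>(b,s)\<in>M. b \<in> A" unfolding is_assignment_def by auto
    then show ?thesis using setxs by auto
  qed
  ultimately show ?thesis by simp
qed

end

theorem theorem2:
  fixes A :: "'a set" and S :: "'s set" and P :: "'p set"
    and ptype :: "'a \<Rightarrow> 'p set" and acc :: "'a \<Rightarrow> 's set"
    and apref :: "'a \<Rightarrow> 's \<Rightarrow> 's \<Rightarrow> bool" and cap :: "'s \<Rightarrow> 'p \<Rightarrow> nat"
    and spref :: "'s \<Rightarrow> 'a \<Rightarrow> 'a \<Rightarrow> bool" and xs :: "'a list"
  assumes "tap_instance A S P ptype acc apref cap spref"
    and "master_list A S acc spref xs"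
  shows "{M. stable A S P ptype acc apref cap spref M} = {serial_dictatorship ptype acc apref cap xs}"
  using sd_stable[OF assms] uniq_final[OF assms] by blast

end
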